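(* Let $f\colon\mathbb{R}^n\to\mathbb{R}$ be differentiable, $\mu$-strongly convex, with $\|\nabla f(x)-\nabla f(y)\|\le L\|x-y\|$ for all $x,y$ (Euclidean norm), where $0<\mu<L$, and let $x_\star$ be its minimizer, $f_\star=f(x_\star)$. Let $\kappa=L/\mu$ and $\gamma=\frac{\sqrt{8\kappa+1}+3}{2\kappa-2}$. Given $x_0$, let $y_0=x_0$ and for $k=0,1,\dots$ \[ y_{k+1}=x_k-\tfrac1L\nabla f(x_k),\qquad x_{k+1}=y_{k+1}+\frac{1}{2\gamma+1}(y_{k+1}-y_k)+\frac{1}{2\gamma+1}(y_{k+1}-x_k). \] Then for $k=1,2,\dots$, \[ f(x_k)-f_\star\le\frac{(1+\gamma)^{-k+2}}{2\gamma}\cdot\frac{\mu+2L}{2}\,\|x_0-x_\star\|^2. \]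
   Context: A function $f$ is $\mu$-strongly convex if $f(x)-\frac{\mu}{2}\|x\|^2$ is convex. *)

theory Defs
  imports "HOL-Analysis.Analysis"
begin

definition strongly_convex_on :: "real \<Rightarrow> ('a::real_inner) set \<Rightarrow> ('a \<Rightarrow> real) \<Rightarrow> bool" where
  "strongly_convex_on \<mu> S f \<longleftrightarrow> convex_on S (\<lambda>x. f x - \<mu> / 2 * (norm x)\<^sup>2)"

end

theory Submission
  imports Defs
begin

definition lc :: "'a \<Rightarrow> 'a \<Rightarrow> 'a \<Rightarrow> 'a \<Rightarrow> real \<Rightarrow> real \<Rightarrow> real \<Rightarrow> real \<Rightarrow> 'a::real_inner" where
  "lc B1 B2 B3 B4 a1 a2 a3 a4 = a1 *\<^sub>R B1 + a2 *\<^sub>R B2 + a3 *\<^sub>R B3 + a4 *\<^sub>R B4"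

definition qf :: "'a::real_inner \<Rightarrow> 'a \<Rightarrow> 'a \<Rightarrow> 'a \<Rightarrow> real \<Rightarrow> real \<Rightarrow> real \<Rightarrow> real \<Rightarrow> real \<Rightarrow> real \<Rightarrow> real \<Rightarrow> real \<Rightarrow> real \<Rightarrow> real \<Rightarrow> real" where
  "qf B1 B2 B3 B4 c11 c12 c13 c14 c22 c23 c24 c33 c34 c44 =
     c11 * (B1 \<bullet> B1) + c12 * (B1 \<bullet> B2) + c13 * (B1 \<bullet> B3) + c14 * (B1 \<bullet> B4)
   + c22 * (B2 \<bullet> B2) + c23 * (B2 \<bullet> B3) + c24 * (B2 \<bullet> B4)
   + c33 * (B3 \<bullet> B3) + c34 * (B3 \<bullet> B4) + c44 * (B4 \<bullet> B4)"

lemma lc_add: "lc B1 B2 B3 B4 a1 a2 a3 a4 + lc B1 B2 B3 B4 b1 b2 b3 b4 = lc B1 B2 B3 B4 (a1+b1) (a2+b2) (a3+b3) (a4+b4)"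
  by (simp add: lc_def algebra_simps)
lemma lc_diff: "lc B1 B2 B3 B4 a1 a2 a3 a4 - lc B1 B2 B3 B4 b1 b2 b3 b4 = lc B1 B2 B3 B4 (a1-b1) (a2-b2) (a3-b3) (a4-b4)"
  by (simp add: lc_def algebra_simps)
lemma lc_scale: "k *\<^sub>R lc B1 B2 B3 B4 a1 a2 a3 a4 = lc B1 B2 B3 B4 (k*a1) (k*a2) (k*a3) (k*a4)"
  by (simp add: lc_def algebra_simps)
lemma lc_minus: "- lc B1 B2 B3 B4 a1 a2 a3 a4 = lc B1 B2 B3 B4 (-a1) (-a2) (-a3) (-a4)"
  by (simp add: lc_def algebra_simps)
lemma lc_inner: "lc B1 B2 B3 B4 a1 a2 a3 a4 \<bullet> lc B1 B2 B3 B4 b1 b2 b3 b4 =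
   qf B1 B2 B3 B4 (a1*b1) (a1*b2+a2*b1) (a1*b3+a3*b1) (a1*b4+a4*b1) (a2*b2) (a2*b3+a3*b2) (a2*b4+a4*b2) (a3*b3) (a3*b4+a4*b3) (a4*b4)"
  by (simp add: lc_def qf_def inner_simps inner_commute algebra_simps)
lemma qf_add: "qf B1 B2 B3 B4 c11 c12 c13 c14 c22 c23 c24 c33 c34 c44 + qf B1 B2 B3 B4 d11 d12 d13 d14 d22 d23 d24 d33 d34 d44
  = qf B1 B2 B3 B4 (c11+d11) (c12+d12) (c13+d13) (c14+d14) (c22+d22) (c23+d23) (c24+d24) (c33+d33) (c34+d34) (c44+d44)"
  by (simp add: qf_def algebra_simps)
lemma qf_diff: "qf B1 B2 B3 B4 c11 c12 c13 c14 c22 c23 c24 c33 c34 c44 - qf B1 B2 B3 B4 d11 d12 d13 d14 d22 d23 d24 d33 d34 d44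
  = qf B1 B2 B3 B4 (c11-d11) (c12-d12) (c13-d13) (c14-d14) (c22-d22) (c23-d23) (c24-d24) (c33-d33) (c34-d34) (c44-d44)"
  by (simp add: qf_def algebra_simps)
lemma qf_scale: "k * qf B1 B2 B3 B4 c11 c12 c13 c14 c22 c23 c24 c33 c34 c44
  = qf B1 B2 B3 B4 (k*c11) (k*c12) (k*c13) (k*c14) (k*c22) (k*c23) (k*c24) (k*c33) (k*c34) (k*c44)"
  by (simp add: qf_def algebra_simps)
lemma qf_minus: "- qf B1 B2 B3 B4 c11 c12 c13 c14 c22 c23 c24 c33 c34 c44
  = qf B1 B2 B3 B4 (-c11) (-c12) (-c13) (-c14) (-c22) (-c23) (-c24) (-c33) (-c34) (-c44)"
  by (simp add: qf_def algebra_simps)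
lemma qf_cong: "c11 = d11 \<Longrightarrow> c12 = d12 \<Longrightarrow> c13 = d13 \<Longrightarrow> c14 = d14 \<Longrightarrow> c22 = d22 \<Longrightarrow> c23 = d23 \<Longrightarrow> c24 = d24 \<Longrightarrow> c33 = d33 \<Longrightarrow> c34 = d34 \<Longrightarrow> c44 = d44 \<Longrightarrow>
  qf B1 B2 B3 B4 c11 c12 c13 c14 c22 c23 c24 c33 c34 c44 = qf B1 B2 B3 B4 d11 d12 d13 d14 d22 d23 d24 d33 d34 d44"
  by simp
lemma lc_e1: "lc B1 B2 B3 B4 1 0 0 0 = B1" by (simp add: lc_def)
lemma lc_e2: "lc B1 B2 B3 B4 0 1 0 0 = B2" by (simp add: lc_def)
lemma lc_e3: "lc B1 B2 B3 B4 0 0 1 0 = B3" by (simp add: lc_def)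
lemma lc_e4: "lc B1 B2 B3 B4 0 0 0 1 = B4" by (simp add: lc_def)

lemmas lc_simps = lc_add lc_diff lc_scale lc_minus lc_inner qf_add qf_diff qf_scale qf_minus


lemma line_deriv:
  fixes f :: "'a::real_inner \<Rightarrow> real"
  assumes grad: "\<And>z. (f has_derivative (\<lambda>h. g z \<bullet> h)) (at z)"
  shows "((\<lambda>t. f (b + t *\<^sub>R v)) has_real_derivative (g (b + t *\<^sub>R v) \<bullet> v)) (at t)"
proof -
  have l: "((\<lambda>t. b + t *\<^sub>R v) has_derivative (\<lambda>h. h *\<^sub>R v)) (at t)"
    by (auto intro!: derivative_eq_intros)
  have "((\<lambda>t. f (b + t *\<^sub>R v)) has_derivative (\<lambda>h. g (b + t *\<^sub>R v) \<bullet> (h *\<^sub>R v))) (at t)"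
    using has_derivative_compose[OF l grad] by (simp add: o_def)
  moreover have "(\<lambda>h. g (b + t *\<^sub>R v) \<bullet> (h *\<^sub>R v)) = (*) (g (b + t *\<^sub>R v) \<bullet> v)"
    by (rule ext) (simp add: mult.commute)
  ultimately show ?thesis
    unfolding has_field_derivative_def by simp
qed

lemma descent:
  fixes f :: "'a::real_inner \<Rightarrow> real"
  assumes grad: "\<And>z. (f has_derivative (\<lambda>h. g z \<bullet> h)) (at z)"
    and lip: "\<And>u v. norm (g u - g v) \<le> L * norm (u - v)"
  shows "f a \<le> f b + g b \<bullet> (a - b) + L / 2 * (norm (a - b))\<^sup>2"
proof -
  define v where "v = a - b"
  define \<phi> where "\<phi> t = f (b + t *\<^sub>R v) - t * (g b \<bullet> v) - L / 2 * t\<^sup>2 * (norm v)\<^sup>2" for t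
  have "\<phi> 1 \<le> \<phi> 0"
  proof (rule DERIV_nonpos_imp_nonincreasing[of 0 1 \<phi>])
    fix t :: real assume t: "0 \<le> t" "t \<le> 1"
    have d: "(\<phi> has_real_derivative (g (b + t *\<^sub>R v) \<bullet> v - g b \<bullet> v - L * t * (norm v)\<^sup>2)) (at t)"
      unfolding \<phi>_def
      by (rule derivative_eq_intros line_deriv[OF grad] refl | simp)+
    have "g (b + t *\<^sub>R v) \<bullet> v - g b \<bullet> v = (g (b + t *\<^sub>R v) - g b) \<bullet> v"
      by (simp add: inner_diff_left)
    also have "\<dots> \<le> norm (g (b + t *\<^sub>R v) - g b) * norm v"
      by (rule norm_cauchy_schwarz)
    also have "\<dots> \<le> (L * norm (t *\<^sub>R v)) * norm v"
      using lip[of "b + t *\<^sub>R v" b] by (intro mult_right_mono) auto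
    also have "\<dots> = L * t * (norm v)\<^sup>2"
      using t by (simp add: power2_eq_square)
    finally show "\<exists>y. (\<phi> has_real_derivative y) (at t) \<and> y \<le> 0"
      using d by (intro exI[of _ "g (b + t *\<^sub>R v) \<bullet> v - g b \<bullet> v - L * t * (norm v)\<^sup>2"]) auto
  qed simp
  then show ?thesis unfolding \<phi>_def v_def by simp
qed

lemma tangent:
  fixes h :: "'a::real_inner \<Rightarrow> real"
  assumes cvx: "convex_on UNIV h"
    and grad: "\<And>z. (h has_derivative (\<lambda>v. H z \<bullet> v)) (at z)"
  shows "h a \<ge> h b + H b \<bullet> (a - b)"
proof -
  define v where "v = a - b"
  define \<psi> where "\<psi> t = h (b + t *\<^sub>R v)" for t
  have cv: "convex_on UNIV \<psi>"
  proof (rule convex_onI)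
    fix t x y :: real assume "0 < t" "t < 1"
    have "b + ((1 - t) * x + t * y) *\<^sub>R v = (1 - t) *\<^sub>R (b + x *\<^sub>R v) + t *\<^sub>R (b + y *\<^sub>R v)"
      by (simp add: algebra_simps)
    then show "\<psi> ((1 - t) *\<^sub>R x + t *\<^sub>R y) \<le> (1 - t) * \<psi> x + t * \<psi> y"
      unfolding \<psi>_def using convex_onD[OF cvx, of t] \<open>0 < t\<close> \<open>t < 1\<close> by simp
  qed simp
  have d: "(\<psi> has_real_derivative (H b \<bullet> v)) (at 0 within UNIV)"
    unfolding \<psi>_def using line_deriv[OF grad, of b v 0] by simp
  have "\<psi> 1 - \<psi> 0 \<ge> (H b \<bullet> v) * (1 - 0)"
    by (rule convex_on_imp_above_tangent[OF cv _ _ _ d]) auto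
  then show ?thesis unfolding \<psi>_def v_def by simp
qed

lemma nn_gen: "norm (x::'a::real_inner) * norm x = x \<bullet> x"
  by (simp add: power2_norm_eq_inner[symmetric] power2_eq_square)

lemma interp:
  fixes f :: "'a::real_inner \<Rightarrow> real"
  assumes grad: "\<And>z. (f has_derivative (\<lambda>h. g z \<bullet> h)) (at z)"
    and lip: "\<And>u v. norm (g u - g v) \<le> L * norm (u - v)"
    and sc: "convex_on UNIV (\<lambda>x. f x - \<mu> / 2 * (norm x)\<^sup>2)"
    and mL: "\<mu> < L"
  shows "f a \<ge> f b + g b \<bullet> (a - b) + \<mu> / 2 * (norm (a - b))\<^sup>2
      + 1 / (2 * (L - \<mu>)) * (norm (g a - g b - \<mu> *\<^sub>R (a - b)))\<^sup>2"
proof -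
  define h where "h z = f z - \<mu> / 2 * (norm z)\<^sup>2" for z
  define H where "H z = g z - \<mu> *\<^sub>R z" for z
  define M where "M = L - \<mu>"
  have M: "M > 0" using mL M_def by simp
  have hgrad: "(h has_derivative (\<lambda>v. H z \<bullet> v)) (at z)" for z
  proof -
    have "(h has_derivative (\<lambda>v. g z \<bullet> v - \<mu> / 2 * (z \<bullet> v + v \<bullet> z))) (at z)"
      unfolding h_def power2_norm_eq_inner
      by (rule derivative_eq_intros grad refl)+
    moreover have "(\<lambda>v. g z \<bullet> v - \<mu> / 2 * (z \<bullet> v + v \<bullet> z)) = (\<lambda>v. H z \<bullet> v)"
      by (rule ext) (simp add: H_def inner_diff_left inner_diff_right inner_commute)
    ultimately show ?thesis by simp
  qed
  have hcvx: "convex_on UNIV h" using sc unfolding h_def .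
  have tan: "h z \<ge> h b + H b \<bullet> (z - b)" for z
    by (rule tangent[OF hcvx hgrad])
  have sq: "\<mu> / 2 * (norm z)\<^sup>2 = \<mu> / 2 * (norm w)\<^sup>2 + \<mu> * (w \<bullet> (z - w)) + \<mu> / 2 * (norm (z - w))\<^sup>2" for z w :: 'a
    by (simp add: power2_norm_eq_inner inner_simps inner_commute algebra_simps)
  have desc: "h z \<le> h w + H w \<bullet> (z - w) + M / 2 * (norm (z - w))\<^sup>2" for z w
  proof -
    have "f z \<le> f w + g w \<bullet> (z - w) + L / 2 * (norm (z - w))\<^sup>2"
      by (rule descent[OF grad lip])
    moreover have "H w \<bullet> (z - w) = g w \<bullet> (z - w) - \<mu> * (w \<bullet> (z - w))"
      by (simp add: H_def inner_diff_left)
    moreover have "(L - \<mu>) / 2 * (norm (z - w))\<^sup>2 = L / 2 * (norm (z - w))\<^sup>2 - \<mu> / 2 * (norm (z - w))\<^sup>2"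
      by (simp add: field_simps)
    ultimately show ?thesis unfolding h_def M_def using sq[of z w] by linarith
  qed
  define \<Delta> where "\<Delta> = H a - H b"
  define z where "z = a - (1 / M) *\<^sub>R \<Delta>"
  have 1: "h b + H b \<bullet> (z - b) \<le> h a + H a \<bullet> (z - a) + M / 2 * (norm (z - a))\<^sup>2"
    using tan[of z] desc[of z a] by linarith
  have za: "z - a = - (1 / M) *\<^sub>R \<Delta>" unfolding z_def by simp
  have zb: "z - b = (a - b) - (1 / M) *\<^sub>R \<Delta>" unfolding z_def by simp
  have 2: "h b + H b \<bullet> (a - b) - (1/M) * (H b \<bullet> \<Delta>) \<le> h a - (1/M) * (H a \<bullet> \<Delta>) + 1 / (2 * M) * (\<Delta> \<bullet> \<Delta>)"
    using 1 M unfolding za zb by (simp add: inner_simps power2_norm_eq_inner power2_eq_square field_simps nn_gen)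
  have 3: "(1/M) * (H a \<bullet> \<Delta>) - (1/M) * (H b \<bullet> \<Delta>) = (1/M) * (\<Delta> \<bullet> \<Delta>)"
    unfolding \<Delta>_def by (simp add: inner_diff_left algebra_simps)
  have 4: "h a \<ge> h b + H b \<bullet> (a - b) + 1 / (2 * M) * (\<Delta> \<bullet> \<Delta>)"
  proof -
    have e: "(1/M)*(\<Delta> \<bullet> \<Delta>) - 1/(2*M)*(\<Delta> \<bullet> \<Delta>) = 1/(2*M)*(\<Delta> \<bullet> \<Delta>)" using M by (simp add: field_simps)
    show ?thesis using 2 3 e by linarith
  qed
  have 5: "\<Delta> = g a - g b - \<mu> *\<^sub>R (a - b)" unfolding \<Delta>_def H_def by (simp add: algebra_simps)
  have 6: "H b \<bullet> (a - b) = g b \<bullet> (a - b) - \<mu> * (b \<bullet> (a - b))" by (simp add: H_def inner_diff_left)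
  show ?thesis
    using 4 sq[of a b] unfolding 5 6 h_def M_def power2_norm_eq_inner[symmetric]
    by (simp add: algebra_simps)
qed

lemma grad_zero:
  fixes f :: "'a::real_inner \<Rightarrow> real"
  assumes grad: "\<And>z. (f has_derivative (\<lambda>h. g z \<bullet> h)) (at z)"
    and lip: "\<And>u v. norm (g u - g v) \<le> L * norm (u - v)"
    and Lp: "L > 0"
    and minim: "\<And>z. f xs \<le> f z"
  shows "g xs = 0"
proof -
  define a where "a = xs - (1/L) *\<^sub>R g xs"
  have nn: "\<And>x::'a. norm x * norm x = x \<bullet> x" by (simp add: power2_norm_eq_inner[symmetric] power2_eq_square)
  have "f a \<le> f xs + g xs \<bullet> (a - xs) + L / 2 * (norm (a - xs))\<^sup>2"
    by (rule descent[OF grad lip])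
  also have "\<dots> = f xs - (1 / (2*L)) * (norm (g xs))\<^sup>2"
    using Lp unfolding a_def by (simp add: power2_norm_eq_inner inner_simps power2_eq_square field_simps nn)
  finally have "(1 / (2*L)) * (norm (g xs))\<^sup>2 \<le> 0" using minim[of a] by linarith
  then have "(norm (g xs))\<^sup>2 \<le> 0" using Lp by (simp add: field_simps)
  then show ?thesis by simp
qed


definition Qf :: "real \<Rightarrow> real \<Rightarrow> real \<Rightarrow> real \<Rightarrow> real \<Rightarrow> 'a::real_inner \<Rightarrow> 'a \<Rightarrow> 'a \<Rightarrow> real" where
  "Qf \<gamma> \<mu> r q p X Y G =
     \<gamma>^2/(2*\<mu>*p)*\<mu>*(\<mu>*r*q/\<gamma>^2) * ((X + (r/\<gamma>) *\<^sub>R (X - Y)) \<bullet> (X + (r/\<gamma>) *\<^sub>R (X - Y)))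
     + \<gamma>^2/(2*\<mu>*p) * ((G - (\<mu>*r*q/\<gamma>^2) *\<^sub>R (X - Y)) \<bullet> (G - (\<mu>*r*q/\<gamma>^2) *\<^sub>R (X - Y)))
     - (\<mu>*r*q/\<gamma>^2)/2 * ((X - Y) \<bullet> (X - Y))"

lemma step_identity_lc:
  fixes B1 B2 B3 B4 :: "'a::real_inner"
  assumes gp: "\<gamma> > 0" and mp: "\<mu> > 0"
    and ad: "a = 2*\<gamma>+1" and rd: "r = 1+\<gamma>" and qd: "q = \<gamma>+2" and pd: "p = 3*\<gamma>+2"
  shows "(1/r) * Qf \<gamma> \<mu> r q p (lc B1 B2 B3 B4 1 0 0 0) (lc B1 B2 B3 B4 0 1 0 0) (lc B1 B2 B3 B4 0 0 1 0) - Qf \<gamma> \<mu> r q p (((lc B1 B2 B3 B4 1 0 0 0) - (\<gamma>^2/(\<mu>*r*q)) *\<^sub>R (lc B1 B2 B3 B4 0 0 1 0)) + (1/a) *\<^sub>R (((lc B1 B2 B3 B4 1 0 0 0) - (\<gamma>^2/(\<mu>*r*q)) *\<^sub>R (lc B1 B2 B3 B4 0 0 1 0)) - (lc B1 B2 B3 B4 0 1 0 0)) + (1/a) *\<^sub>R (((lc B1 B2 B3 B4 1 0 0 0) - (\<gamma>^2/(\<mu>*r*q)) *\<^sub>R (lc B1 B2 B3 B4 0 0 1 0)) - (lc B1 B2 B3 B4 1 0 0 0))) ((lc B1 B2 B3 B4 1 0 0 0) - (\<gamma>^2/(\<mu>*r*q)) *\<^sub>R (lc B1 B2 B3 B4 0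 0 1 0)) (lc B1 B2 B3 B4 0 0 0 1)
     - (1-1/r) * (((lc B1 B2 B3 B4 0 0 1 0) \<bullet> (lc B1 B2 B3 B4 1 0 0 0)) - \<mu>/2 * ((lc B1 B2 B3 B4 1 0 0 0) \<bullet> (lc B1 B2 B3 B4 1 0 0 0)) - \<gamma>^2/(2*\<mu>*p) * (((lc B1 B2 B3 B4 0 0 1 0) - \<mu> *\<^sub>R (lc B1 B2 B3 B4 1 0 0 0)) \<bullet> ((lc B1 B2 B3 B4 0 0 1 0) - \<mu> *\<^sub>R (lc B1 B2 B3 B4 1 0 0 0))))
     - (- ((lc B1 B2 B3 B4 0 0 0 1) \<bullet> ((lc B1 B2 B3 B4 1 0 0 0) - (((lc B1 B2 B3 B4 1 0 0 0) - (\<gamma>^2/(\<mu>*r*q)) *\<^sub>R (lc B1 B2 B3 B4 0 0 1 0)) + (1/a) *\<^sub>R (((lc B1 B2 B3 B4 1 0 0 0) - (\<gamma>^2/(\<mu>*r*q)) *\<^sub>R (lc B1 B2 B3 B4 0 0 1 0)) - (lc B1 B2 B3 B4 0 1 0 0)) + (1/a) *\<^sub>R (((lc B1 B2 B3 B4 1 0 0 0) - (\<gamma>^2/(\<mu>*r*q)) *\<^sub>R (lc B1 B2 B3 B4 0 0 1 0)) - (lc B1 B2 B3 B4 1 0 0 0))))) - \<mu>/2 * (((lc B1 B2 B3 B4 1 0 0 0) - (((lc B1 B2 B3 B4 1 0 0 0) - (\<gamma>^2/(\<mu>*r*q)) *\<^sub>R (lc B1 B2 B3 B4 0 0 1 0))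 + (1/a) *\<^sub>R (((lc B1 B2 B3 B4 1 0 0 0) - (\<gamma>^2/(\<mu>*r*q)) *\<^sub>R (lc B1 B2 B3 B4 0 0 1 0)) - (lc B1 B2 B3 B4 0 1 0 0)) + (1/a) *\<^sub>R (((lc B1 B2 B3 B4 1 0 0 0) - (\<gamma>^2/(\<mu>*r*q)) *\<^sub>R (lc B1 B2 B3 B4 0 0 1 0)) - (lc B1 B2 B3 B4 1 0 0 0)))) \<bullet> ((lc B1 B2 B3 B4 1 0 0 0) - (((lc B1 B2 B3 B4 1 0 0 0) - (\<gamma>^2/(\<mu>*r*q)) *\<^sub>R (lc B1 B2 B3 B4 0 0 1 0)) + (1/a) *\<^sub>R (((lc B1 B2 B3 B4 1 0 0 0) - (\<gamma>^2/(\<mu>*r*q)) *\<^sub>R (lc B1 B2 B3 B4 0 0 1 0)) - (lc B1 B2 B3 B4 0 1 0 0)) + (1/a) *\<^sub>R (((lc B1 B2 B3 B4 1 0 0 0) - (\<gamma>^2/(\<mu>*r*q)) *\<^sub>R (lc B1 B2 B3 B4 0 0 1 0)) - (lc B1 B2 B3 B4 1 0 0 0))))) - \<gamma>^2/(2*\<mu>*p) * (((lc B1 B2 B3 B4 0 0 1 0) - (lc B1 B2 B3 B4 0 0 0 1) - \<mu> *\<^sub>R ((lc B1 B2 B3 B4 1 0 0 0) - (((lc B1 B2 B3 B4 1 0 0 0) - (\<gamma>^2/(\<mu>*r*q)) *\<^sub>R (lc B1 B2 B3 B4 0 0 1 0)) + (1/a) *\<^sub>R (((lc B1 B2 B3 B4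 1 0 0 0) - (\<gamma>^2/(\<mu>*r*q)) *\<^sub>R (lc B1 B2 B3 B4 0 0 1 0)) - (lc B1 B2 B3 B4 0 1 0 0)) + (1/a) *\<^sub>R (((lc B1 B2 B3 B4 1 0 0 0) - (\<gamma>^2/(\<mu>*r*q)) *\<^sub>R (lc B1 B2 B3 B4 0 0 1 0)) - (lc B1 B2 B3 B4 1 0 0 0))))) \<bullet> ((lc B1 B2 B3 B4 0 0 1 0) - (lc B1 B2 B3 B4 0 0 0 1) - \<mu> *\<^sub>R ((lc B1 B2 B3 B4 1 0 0 0) - (((lc B1 B2 B3 B4 1 0 0 0) - (\<gamma>^2/(\<mu>*r*q)) *\<^sub>R (lc B1 B2 B3 B4 0 0 1 0)) + (1/a) *\<^sub>R (((lc B1 B2 B3 B4 1 0 0 0) - (\<gamma>^2/(\<mu>*r*q)) *\<^sub>R (lc B1 B2 B3 B4 0 0 1 0)) - (lc B1 B2 B3 B4 0 1 0 0)) + (1/a) *\<^sub>R (((lc B1 B2 B3 B4 1 0 0 0) - (\<gamma>^2/(\<mu>*r*q)) *\<^sub>R (lc B1 B2 B3 B4 0 0 1 0)) - (lc B1 B2 B3 B4 1 0 0 0)))))))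
   = \<mu> * a * q / (2*\<gamma>*p) * (((lc B1 B2 B3 B4 1 0 0 0) - (lc B1 B2 B3 B4 0 1 0 0)) \<bullet> ((lc B1 B2 B3 B4 1 0 0 0) - (lc B1 B2 B3 B4 0 1 0 0)))
     + \<gamma>^3 / (\<mu>*r*q*p) * ((lc B1 B2 B3 B4 0 0 1 0) \<bullet> (lc B1 B2 B3 B4 0 0 1 0))"
proof -
  have nz: "a \<noteq> 0" "r \<noteq> 0" "q \<noteq> 0" "p \<noteq> 0" "\<gamma> \<noteq> 0" "\<mu> \<noteq> 0" using gp mp ad rd qd pd by auto
  show ?thesis
    unfolding Qf_def
    apply (simp only: lc_simps)
    apply (rule qf_cong)
    apply (simp_all add: nz field_simps)
    apply (simp_all add: ad rd qd pd)
    apply algebra+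
    done
qed

lemma step_identity:
  fixes X Y G G1 X1 Y1 :: "'a::real_inner"
  assumes gp: "\<gamma> > 0" and mp: "\<mu> > 0"
    and ad: "a = 2*\<gamma>+1" and rd: "r = 1+\<gamma>" and qd: "q = \<gamma>+2" and pd: "p = 3*\<gamma>+2"
    and Y1d: "Y1 = (X - (\<gamma>^2/(\<mu>*r*q)) *\<^sub>R G)"
    and X1d: "X1 = Y1 + (1/a) *\<^sub>R (Y1 - Y) + (1/a) *\<^sub>R (Y1 - X)"
  shows "(1/r) * Qf \<gamma> \<mu> r q p X Y G - Qf \<gamma> \<mu> r q p X1 Y1 G1
     - (1-1/r) * ((G \<bullet> X) - \<mu>/2 * (X \<bullet> X) - \<gamma>^2/(2*\<mu>*p) * ((G - \<mu> *\<^sub>R X) \<bullet> (G - \<mu> *\<^sub>R X)))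
     - (- (G1 \<bullet> (X - X1)) - \<mu>/2 * ((X - X1) \<bullet> (X - X1)) - \<gamma>^2/(2*\<mu>*p) * ((G - G1 - \<mu> *\<^sub>R (X - X1)) \<bullet> (G - G1 - \<mu> *\<^sub>R (X - X1))))
   = \<mu> * a * q / (2*\<gamma>*p) * ((X - Y) \<bullet> (X - Y))
     + \<gamma>^3 / (\<mu>*r*q*p) * (G \<bullet> G)"
  using step_identity_lc[OF gp mp ad rd qd pd, of X Y G G1] unfolding X1d Y1d lc_e1 lc_e2 lc_e3 lc_e4 .

lemma nonneg_identity_lc:
  fixes B1 B2 B3 B4 :: "'a::real_inner"
  assumes gp: "\<gamma> > 0" and mp: "\<mu> > 0"
    and ad: "a = 2*\<gamma>+1" and rd: "r = 1+\<gamma>" and qd: "q = \<gamma>+2" and pd: "p = 3*\<gamma>+2"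
    and Dd: "D = 2*\<gamma>^2+2*\<gamma>+1"
  shows "Qf \<gamma> \<mu> r q p (lc B1 B2 B3 B4 1 0 0 0) (lc B1 B2 B3 B4 0 1 0 0) (lc B1 B2 B3 B4 0 0 1 0) + (1/a + 2*\<gamma>/r) * (\<mu>/2 * ((lc B1 B2 B3 B4 1 0 0 0) \<bullet> (lc B1 B2 B3 B4 1 0 0 0)) + \<gamma>^2/(2*\<mu>*p) * (((lc B1 B2 B3 B4 0 0 1 0) - \<mu> *\<^sub>R (lc B1 B2 B3 B4 1 0 0 0)) \<bullet> ((lc B1 B2 B3 B4 0 0 1 0) - \<mu> *\<^sub>R (lc B1 B2 B3 B4 1 0 0 0)))) - (\<gamma>/r) * ((lc B1 B2 B3 B4 0 0 1 0) \<bullet> (lc B1 B2 B3 B4 1 0 0 0))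
    = \<mu>*r*q*D/(2*\<gamma>^2*p) * ((((lc B1 B2 B3 B4 1 0 0 0) - (lc B1 B2 B3 B4 0 1 0 0)) + (\<gamma>*r/D) *\<^sub>R (lc B1 B2 B3 B4 1 0 0 0) - (\<gamma>^2/(\<mu>*D)) *\<^sub>R (lc B1 B2 B3 B4 0 0 1 0)) \<bullet> (((lc B1 B2 B3 B4 1 0 0 0) - (lc B1 B2 B3 B4 0 1 0 0)) + (\<gamma>*r/D) *\<^sub>R (lc B1 B2 B3 B4 1 0 0 0) - (\<gamma>^2/(\<mu>*D)) *\<^sub>R (lc B1 B2 B3 B4 0 0 1 0)))
      + \<mu>*q*(10*\<gamma>^4+17*\<gamma>^3+13*\<gamma>^2+5*\<gamma>+1)/(2*a*p*D) * ((lc B1 B2 B3 B4 1 0 0 0) \<bullet> (lc B1 B2 B3 B4 1 0 0 0))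
      + 2 * (- (\<gamma>^2*(6*\<gamma>^4+15*\<gamma>^3+15*\<gamma>^2+6*\<gamma>+1)/(2*r*a*p*D))) * ((lc B1 B2 B3 B4 1 0 0 0) \<bullet> (lc B1 B2 B3 B4 0 0 1 0))
      + \<gamma>^3*(10*\<gamma>^3+15*\<gamma>^2+8*\<gamma>+1)/(2*\<mu>*r*a*p*D) * ((lc B1 B2 B3 B4 0 0 1 0) \<bullet> (lc B1 B2 B3 B4 0 0 1 0))"
proof -
  have g2: "0 < \<gamma>^2" using gp by simp
  have Dp: "D > 0" using Dd gp g2 by linarith
  have nz: "a \<noteq> 0" "r \<noteq> 0" "q \<noteq> 0" "p \<noteq> 0" "\<gamma> \<noteq> 0" "\<mu> \<noteq> 0" "D \<noteq> 0" using gp mp ad rd qd pd Dp by auto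
  show ?thesis
    unfolding Qf_def
    apply (simp only: lc_simps)
    apply (rule qf_cong)
    apply (simp_all add: nz field_simps)
    apply (simp_all add: ad rd qd pd Dd)
    apply algebra+
    done
qed

lemma nonneg_identity:
  fixes X Y G :: "'a::real_inner"
  assumes gp: "\<gamma> > 0" and mp: "\<mu> > 0"
    and ad: "a = 2*\<gamma>+1" and rd: "r = 1+\<gamma>" and qd: "q = \<gamma>+2" and pd: "p = 3*\<gamma>+2"
    and Dd: "D = 2*\<gamma>^2+2*\<gamma>+1"
  shows "Qf \<gamma> \<mu> r q p X Y G + (1/a + 2*\<gamma>/r) * (\<mu>/2 * (X \<bullet> X) + \<gamma>^2/(2*\<mu>*p) * ((G - \<mu> *\<^sub>R X) \<bullet> (G - \<mu> *\<^sub>R X))) - (\<gamma>/r) * (G \<bullet> X)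
    = \<mu>*r*q*D/(2*\<gamma>^2*p) * (((X - Y) + (\<gamma>*r/D) *\<^sub>R X - (\<gamma>^2/(\<mu>*D)) *\<^sub>R G) \<bullet> ((X - Y) + (\<gamma>*r/D) *\<^sub>R X - (\<gamma>^2/(\<mu>*D)) *\<^sub>R G))
      + \<mu>*q*(10*\<gamma>^4+17*\<gamma>^3+13*\<gamma>^2+5*\<gamma>+1)/(2*a*p*D) * (X \<bullet> X)
      + 2 * (- (\<gamma>^2*(6*\<gamma>^4+15*\<gamma>^3+15*\<gamma>^2+6*\<gamma>+1)/(2*r*a*p*D))) * (X \<bullet> G)
      + \<gamma>^3*(10*\<gamma>^3+15*\<gamma>^2+8*\<gamma>+1)/(2*\<mu>*r*a*p*D) * (G \<bullet> G)"
  using nonneg_identity_lc[OF gp mp ad rd qd pd Dd, of X Y G G] unfolding lc_e1 lc_e2 lc_e3 .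


lemma psd2:
  fixes u v :: "'a::real_inner"
  assumes A: "A > 0" and det: "B^2 \<le> A * C"
  shows "0 \<le> A * (u \<bullet> u) + 2 * B * (u \<bullet> v) + C * (v \<bullet> v)"
proof -
  have "A * (A * (u \<bullet> u) + 2 * B * (u \<bullet> v) + C * (v \<bullet> v))
      = (A *\<^sub>R u + B *\<^sub>R v) \<bullet> (A *\<^sub>R u + B *\<^sub>R v) + (A * C - B^2) * (v \<bullet> v)"
    by (simp add: inner_simps inner_commute algebra_simps power2_eq_square)
  also have "\<dots> \<ge> 0" using det by (intro add_nonneg_nonneg mult_nonneg_nonneg) auto
  finally show ?thesis using A by (simp add: zero_le_mult_iff)
qed

lemma coef_det:
  fixes \<gamma> \<mu> a r q p D :: real
  assumes gp: "\<gamma> > 0" and mp: "\<mu> > 0"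
    and ad: "a = 2*\<gamma>+1" and rd: "r = 1+\<gamma>" and qd: "q = \<gamma>+2" and pd: "p = 3*\<gamma>+2"
    and Dd: "D = 2*\<gamma>^2+2*\<gamma>+1"
  shows "(- (\<gamma>^2*(6*\<gamma>^4+15*\<gamma>^3+15*\<gamma>^2+6*\<gamma>+1)/(2*r*a*p*D)))^2
     \<le> (\<mu>*q*(10*\<gamma>^4+17*\<gamma>^3+13*\<gamma>^2+5*\<gamma>+1)/(2*a*p*D)) * (\<gamma>^3*(10*\<gamma>^3+15*\<gamma>^2+8*\<gamma>+1)/(2*\<mu>*r*a*p*D))"
proof -
  have g2: "0 < \<gamma>^2" using gp by simp
  have Dp: "D > 0" using Dd gp g2 by linarith
  have pos: "a > 0" "r > 0" "q > 0" "p > 0" using gp ad rd qd pd by auto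
  define W where "W = 6*\<gamma>^4+15*\<gamma>^3+15*\<gamma>^2+6*\<gamma>+1"
  define P4 where "P4 = 10*\<gamma>^4+17*\<gamma>^3+13*\<gamma>^2+5*\<gamma>+1"
  define Z where "Z = 10*\<gamma>^3+15*\<gamma>^2+8*\<gamma>+1"
  have key: "\<gamma> * W^2 \<le> r * q * P4 * Z"
  proof -
    have "r * q * P4 * Z - \<gamma> * W^2 = 2 + 28*\<gamma> + 164*\<gamma>^2 + 563*\<gamma>^3 + 1258*\<gamma>^4 + 1892*\<gamma>^5 + 1904*\<gamma>^6 + 1220*\<gamma>^7 + 440*\<gamma>^8 + 64*\<gamma>^9"
      unfolding W_def P4_def Z_def rd qd by algebra
    also have "\<dots> \<ge> 0" using gp by (intro add_nonneg_nonneg mult_nonneg_nonneg) auto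
    finally show ?thesis by simp
  qed
  have lhs: "(- (\<gamma>^2*W/(2*r*a*p*D)))^2 = \<gamma>^3 * (\<gamma> * W^2) / (4*r^2*a^2*p^2*D^2)"
    by (simp add: power2_eq_square power3_eq_cube field_simps)
  have rhs: "(\<mu>*q*P4/(2*a*p*D)) * (\<gamma>^3*Z/(2*\<mu>*r*a*p*D)) = \<gamma>^3 * (r*q*P4*Z) / (4*r^2*a^2*p^2*D^2)"
    using mp pos Dp by (simp add: power2_eq_square field_simps)
  have "\<gamma>^3 * (\<gamma> * W^2) / (4*r^2*a^2*p^2*D^2) \<le> \<gamma>^3 * (r*q*P4*Z) / (4*r^2*a^2*p^2*D^2)"
    using key gp pos Dp by (intro divide_right_mono mult_left_mono) auto
  then show ?thesis unfolding W_def[symmetric] P4_def[symmetric] Z_def[symmetric] lhs rhs .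
qed



lemma alg_aux:
  fixes gx xx gg \<mu> \<gamma> p R :: real
  assumes mp: "\<mu> > 0" and pp: "p > 0" and R: "R = \<gamma>^2 + p"
  shows "gx - \<mu>/2 * xx - \<gamma>^2/(2*\<mu>*p) * (gg - 2 * \<mu> * gx + \<mu>^2 * xx)
        + \<mu>*R/(2*p) * xx + \<gamma>^2/(2*\<mu>*p) * gg = (R/p) * gx"
  unfolding R using mp pp by (simp add: field_simps power2_eq_square)

lemma combine_step:
  fixes \<rho> Q Q1 B1 B2 R fs fk fk1 :: real
  assumes e: "\<rho>*Q - Q1 - (1-\<rho>)*B1 - B2 = R" and r: "0 \<le> 1-\<rho>"
    and i1: "0 \<le> fs - fk + B1" and i2: "0 \<le> fk - fk1 + B2" and R: "0 \<le> R"
  shows "fk1 - fs + Q1 \<le> \<rho>*(fk - fs + Q)"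
proof -
  have "0 \<le> (1-\<rho>)*(fs - fk + B1)" using r i1 by simp
  moreover have "\<rho>*(fk - fs + Q) - (fk1 - fs + Q1) = (1-\<rho>)*(fs - fk + B1) + (fk - fk1 + B2) + R"
    using e[symmetric] by (simp add: algebra_simps)
  ultimately show ?thesis using i2 R by linarith
qed

lemma combine_lower:
  fixes Q P GX T \<alpha> lm \<theta> fs fk :: real
  assumes e: "Q + (\<alpha> + 2*lm)*P - lm*GX = T" and T: "0 \<le> T"
    and j1: "0 \<le> fk - fs - P" and j2: "0 \<le> fs - fk + GX - P"
    and a: "0 \<le> \<alpha>" and l: "0 \<le> lm" and th: "\<theta> = 1 - \<alpha>"
  shows "\<theta>*(fk - fs) \<le> fk - fs + Q"
proof -
  have "0 \<le> (\<alpha> + lm)*(fk - fs - P)" using a l j1 by simp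
  moreover have "0 \<le> lm*(fs - fk + GX - P)" using l j2 by simp
  moreover have "fk - fs + Q - \<theta>*(fk - fs) = (\<alpha> + lm)*(fk - fs - P) + lm*(fs - fk + GX - P) + T"
    unfolding th using e[symmetric] by (simp add: algebra_simps)
  ultimately show ?thesis using T by linarith
qed


theorem theorem4:
  fixes f :: "real ^ 'n \<Rightarrow> real" and g :: "real ^ 'n \<Rightarrow> real ^ 'n"
    and \<mu> L :: real and xstar x0 :: "real ^ 'n"
    and x y :: "nat \<Rightarrow> real ^ 'n" and k :: nat
  assumes grad: "\<And>z. (f has_derivative (\<lambda>h. g z \<bullet> h)) (at z)"
    and sc: "strongly_convex_on \<mu> UNIV f"
    and lip: "\<And>u v. norm (g u - g v) \<le> L * norm (u - v)"
    and mu_pos: "0 < \<mu>" and mu_L: "\<mu> < L"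
    and minim: "\<And>z. f xstar \<le> f z"
    and x_0: "x 0 = x0" and y_0: "y 0 = x0"
    and y_step: "\<And>j. y (Suc j) = x j - (1 / L) *\<^sub>R g (x j)"
    and x_step: "\<And>j. x (Suc j) = y (Suc j)
        + (1 / (2 * ((sqrt (8 * (L / \<mu>) + 1) + 3) / (2 * (L / \<mu>) - 2)) + 1)) *\<^sub>R (y (Suc j) - y j)
        + (1 / (2 * ((sqrt (8 * (L / \<mu>) + 1) + 3) / (2 * (L / \<mu>) - 2)) + 1)) *\<^sub>R (y (Suc j) - x j)"
    and k_pos: "1 \<le> k"
  shows "f (x k) - f xstar \<le>
    (1 + (sqrt (8 * (L / \<mu>) + 1) + 3) / (2 * (L / \<mu>) - 2)) powr (2 - real k)
      / (2 * ((sqrt (8 * (L / \<mu>) + 1) + 3) / (2 * (L / \<mu>) - 2)))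
      * ((\<mu> + 2 * L) / 2) * (norm (x0 - xstar))\<^sup>2"
proof -
  define \<kappa> where "\<kappa> = L / \<mu>"
  define \<gamma> where "\<gamma> = (sqrt (8 * \<kappa> + 1) + 3) / (2 * \<kappa> - 2)"
  have gam_eq: "(sqrt (8 * (L / \<mu>) + 1) + 3) / (2 * (L / \<mu>) - 2) = \<gamma>"
    unfolding \<gamma>_def \<kappa>_def ..
  have \<kappa>1: "1 < \<kappa>" unfolding \<kappa>_def using mu_pos mu_L by (simp add: field_simps)
  define S where "S = sqrt (8 * \<kappa> + 1)"
  have S0: "0 \<le> S" unfolding S_def using \<kappa>1 by simp
  have S2: "S^2 = 8 * \<kappa> + 1" unfolding S_def using \<kappa>1 by simp
  have gp: "0 < \<gamma>" unfolding \<gamma>_def S_def[symmetric] using S0 \<kappa>1 by (intro divide_pos_pos) auto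
  have h1: "2 * (\<kappa> - 1) * \<gamma> = S + 3" unfolding \<gamma>_def S_def[symmetric] using \<kappa>1 by (simp add: field_simps)
  have h2: "(2 * (\<kappa> - 1) * \<gamma> - 3)^2 = 8 * \<kappa> + 1" using h1 S2 by simp
  have h3: "4 * (\<kappa> - 1) * ((\<kappa> - 1) * \<gamma>^2 - 3 * \<gamma> - 2) = (2 * (\<kappa> - 1) * \<gamma> - 3)^2 - (8 * \<kappa> + 1)"
    by algebra
  have "4 * (\<kappa> - 1) * ((\<kappa> - 1) * \<gamma>^2 - 3 * \<gamma> - 2) = 0" using h2 h3 by simp
  then have "(\<kappa> - 1) * \<gamma>^2 - 3 * \<gamma> - 2 = 0" using \<kappa>1 by simp
  then have h4: "\<kappa> * \<gamma>^2 = (1 + \<gamma>) * (\<gamma> + 2)" by (simp add: algebra_simps power2_eq_square)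
  define a where "a = 2*\<gamma>+1"
  define r where "r = 1+\<gamma>"
  define q where "q = \<gamma>+2"
  define p where "p = 3*\<gamma>+2"
  define D where "D = 2*\<gamma>^2+2*\<gamma>+1"
  have pos: "0 < a" "0 < r" "0 < q" "0 < p" using gp unfolding a_def r_def q_def p_def by auto
  have rq: "r * q = \<gamma>^2 + p" unfolding r_def q_def p_def by algebra
  have Lval: "L = \<mu> * r * q / \<gamma>^2"
  proof -
    have "L = \<kappa> * \<mu>" unfolding \<kappa>_def using mu_pos by simp
    also have "\<dots> = \<mu> * (\<kappa> * \<gamma>^2) / \<gamma>^2" using gp by simp
    also have "\<dots> = \<mu> * r * q / \<gamma>^2" unfolding h4 r_def q_def by simp
    finally show ?thesis .
  qed
  have Linv: "1 / L = \<gamma>^2 / (\<mu> * r * q)" unfolding Lval by simp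
  have Lmu: "1 / (2 * (L - \<mu>)) = \<gamma>^2 / (2 * \<mu> * p)"
  proof -
    have "L - \<mu> = \<mu> * (r * q - \<gamma>^2) / \<gamma>^2" unfolding Lval using gp by (simp add: field_simps)
    also have "\<dots> = \<mu> * p / \<gamma>^2" unfolding rq by simp
    finally show ?thesis by simp
  qed
  have Lpos: "0 < L" using mu_pos mu_L by simp
  have g0: "g xstar = 0" by (rule grad_zero[OF grad lip Lpos minim])
  have scv: "convex_on UNIV (\<lambda>x. f x - \<mu> / 2 * (norm x)\<^sup>2)" using sc unfolding strongly_convex_on_def .
  have I: "f v + g v \<bullet> (u - v) + \<mu> / 2 * (norm (u - v))\<^sup>2
      + \<gamma>^2 / (2 * \<mu> * p) * (norm (g u - g v - \<mu> *\<^sub>R (u - v)))\<^sup>2 \<le> f u" for u v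
    using interp[OF grad lip scv mu_L, of v u] unfolding Lmu by simp
  have ys: "y (Suc j) = x j - (\<gamma>^2 / (\<mu> * r * q)) *\<^sub>R g (x j)" for j
    using y_step[of j] unfolding Linv by simp
  have xs': "x (Suc j) = y (Suc j) + (1 / a) *\<^sub>R (y (Suc j) - y j) + (1 / a) *\<^sub>R (y (Suc j) - x j)" for j
    using x_step[of j] unfolding gam_eq a_def .
  have sqn: "(norm v)\<^sup>2 = v \<bullet> v" for v :: "real ^ 'n" by (simp add: power2_norm_eq_inner)
  define E where "E k = f (x k) - f xstar + Qf \<gamma> \<mu> r q p (x k - xstar) (y k - xstar) (g (x k))" for k
  have I': "f v + g v \<bullet> (u - v) + \<mu> / 2 * ((u - v) \<bullet> (u - v))
      + \<gamma>^2 / (2 * \<mu> * p) * ((g u - g v - \<mu> *\<^sub>R (u - v)) \<bullet> (g u - g v - \<mu> *\<^sub>R (u - v))) \<le> f u" for u v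
    using I[where u=u and v=v] unfolding sqn .
  have I1: "0 \<le> f xstar - f (x k) + ((g (x k) \<bullet> (x k - xstar)) - \<mu>/2 * ((x k - xstar) \<bullet> (x k - xstar))
      - \<gamma>^2/(2*\<mu>*p) * ((g (x k) - \<mu> *\<^sub>R (x k - xstar)) \<bullet> (g (x k) - \<mu> *\<^sub>R (x k - xstar))))" for k
  proof -
    have A: "f (x k) + g (x k) \<bullet> (xstar - x k) + \<mu> / 2 * ((xstar - x k) \<bullet> (xstar - x k))
      + \<gamma>^2 / (2 * \<mu> * p) * ((g xstar - g (x k) - \<mu> *\<^sub>R (xstar - x k)) \<bullet> (g xstar - g (x k) - \<mu> *\<^sub>R (xstar - x k))) \<le> f xstar"
      by (rule I')
    have v1: "xstar - x k = - (x k - xstar)" by simp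
    have v2: "g xstar - g (x k) - \<mu> *\<^sub>R (xstar - x k) = - (g (x k) - \<mu> *\<^sub>R (x k - xstar))"
      by (simp add: g0 algebra_simps)
    have n1: "(xstar - x k) \<bullet> (xstar - x k) = (x k - xstar) \<bullet> (x k - xstar)"
      by (simp only: v1 inner_minus_left inner_minus_right minus_minus)
    have n2: "(g xstar - g (x k) - \<mu> *\<^sub>R (xstar - x k)) \<bullet> (g xstar - g (x k) - \<mu> *\<^sub>R (xstar - x k))
        = (g (x k) - \<mu> *\<^sub>R (x k - xstar)) \<bullet> (g (x k) - \<mu> *\<^sub>R (x k - xstar))"
      by (simp only: v2 inner_minus_left inner_minus_right minus_minus)
    have n3: "g (x k) \<bullet> (xstar - x k) = - (g (x k) \<bullet> (x k - xstar))"
      by (simp only: v1 inner_minus_right)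
    show ?thesis using A unfolding n1 n2 n3 by linarith
  qed
  have step: "E (Suc k) \<le> (1 / r) * E k" for k
  proof -
    define X where "X = x k - xstar"
    define Y where "Y = y k - xstar"
    define G where "G = g (x k)"
    define X1 where "X1 = x (Suc k) - xstar"
    define Y1 where "Y1 = y (Suc k) - xstar"
    define G1 where "G1 = g (x (Suc k))"
    have Y1d: "Y1 = X - (\<gamma>^2/(\<mu>*r*q)) *\<^sub>R G" unfolding Y1_def X_def G_def ys by simp
    have X1d: "X1 = Y1 + (1/a) *\<^sub>R (Y1 - Y) + (1/a) *\<^sub>R (Y1 - X)"
      unfolding X1_def Y1_def Y_def X_def xs'[of k] by (simp add: algebra_simps)
    note id = step_identity[OF gp mu_pos a_def r_def q_def p_def Y1d X1d]
    have i1: "0 \<le> f xstar - f (x k) + ((G \<bullet> X) - \<mu>/2 * (X \<bullet> X) - \<gamma>^2/(2*\<mu>*p) * ((G - \<mu> *\<^sub>R X) \<bullet> (G - \<mu> *\<^sub>R X)))"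
      using I1[of k] unfolding X_def G_def .
    have i2: "0 \<le> f (x k) - f (x (Suc k)) + (- (G1 \<bullet> (X - X1)) - \<mu>/2 * ((X - X1) \<bullet> (X - X1)) - \<gamma>^2/(2*\<mu>*p) * ((G - G1 - \<mu> *\<^sub>R (X - X1)) \<bullet> (G - G1 - \<mu> *\<^sub>R (X - X1))))"
    proof -
      have e: "x k - x (Suc k) = X - X1" unfolding X_def X1_def by simp
      have "f (x (Suc k)) + g (x (Suc k)) \<bullet> (x k - x (Suc k)) + \<mu> / 2 * ((x k - x (Suc k)) \<bullet> (x k - x (Suc k)))
        + \<gamma>^2 / (2 * \<mu> * p) * ((g (x k) - g (x (Suc k)) - \<mu> *\<^sub>R (x k - x (Suc k))) \<bullet> (g (x k) - g (x (Suc k)) - \<mu> *\<^sub>R (x k - x (Suc k)))) \<le> f (x k)"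
        by (rule I')
      then show ?thesis unfolding e G_def[symmetric] G1_def[symmetric] by linarith
    qed
    have R0: "0 \<le> \<mu> * a * q / (2*\<gamma>*p) * ((X - Y) \<bullet> (X - Y)) + \<gamma>^3 / (\<mu>*r*q*p) * (G \<bullet> G)"
      using gp mu_pos pos by (intro add_nonneg_nonneg mult_nonneg_nonneg) auto
    have r01: "0 \<le> 1 - 1 / r" using pos unfolding r_def using gp by (simp add: field_simps)
    have "f (x (Suc k)) - f xstar + Qf \<gamma> \<mu> r q p X1 Y1 G1 \<le> (1/r) * (f (x k) - f xstar + Qf \<gamma> \<mu> r q p X Y G)"
      by (rule combine_step[OF id r01 i1 i2 R0])
    then show ?thesis unfolding E_def X_def Y_def G_def X1_def Y1_def G1_def .
  qed
  have lower: "(2*\<gamma>/a) * (f (x k) - f xstar) \<le> E k" for k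
  proof -
    define X where "X = x k - xstar"
    define Y where "Y = y k - xstar"
    define G where "G = g (x k)"
    note id = nonneg_identity[OF gp mu_pos a_def r_def q_def p_def D_def, of X Y G]
    have j2: "0 \<le> f xstar - f (x k) + (G \<bullet> X) - (\<mu>/2 * (X \<bullet> X) + \<gamma>^2/(2*\<mu>*p) * ((G - \<mu> *\<^sub>R X) \<bullet> (G - \<mu> *\<^sub>R X)))"
      using I1[of k] unfolding X_def G_def by linarith
    have j1: "0 \<le> f (x k) - f xstar - (\<mu>/2 * (X \<bullet> X) + \<gamma>^2/(2*\<mu>*p) * ((G - \<mu> *\<^sub>R X) \<bullet> (G - \<mu> *\<^sub>R X)))"
    proof -
      have "f xstar + g xstar \<bullet> (x k - xstar) + \<mu> / 2 * ((x k - xstar) \<bullet> (x k - xstar))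
        + \<gamma>^2 / (2 * \<mu> * p) * ((g (x k) - g xstar - \<mu> *\<^sub>R (x k - xstar)) \<bullet> (g (x k) - g xstar - \<mu> *\<^sub>R (x k - xstar))) \<le> f (x k)"
        by (rule I')
      then show ?thesis unfolding X_def[symmetric] G_def[symmetric] g0 inner_zero_left diff_zero by linarith
    qed
    have Dp: "0 < D" unfolding D_def using gp by (simp add: add_pos_pos)
    have T0: "0 \<le> \<mu>*r*q*D/(2*\<gamma>^2*p) * (((X - Y) + (\<gamma>*r/D) *\<^sub>R X - (\<gamma>^2/(\<mu>*D)) *\<^sub>R G) \<bullet> ((X - Y) + (\<gamma>*r/D) *\<^sub>R X - (\<gamma>^2/(\<mu>*D)) *\<^sub>R G))
      + \<mu>*q*(10*\<gamma>^4+17*\<gamma>^3+13*\<gamma>^2+5*\<gamma>+1)/(2*a*p*D) * (X \<bullet> X)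
      + 2 * (- (\<gamma>^2*(6*\<gamma>^4+15*\<gamma>^3+15*\<gamma>^2+6*\<gamma>+1)/(2*r*a*p*D))) * (X \<bullet> G)
      + \<gamma>^3*(10*\<gamma>^3+15*\<gamma>^2+8*\<gamma>+1)/(2*\<mu>*r*a*p*D) * (G \<bullet> G)"
    proof -
      have A: "0 < \<mu>*q*(10*\<gamma>^4+17*\<gamma>^3+13*\<gamma>^2+5*\<gamma>+1)/(2*a*p*D)"
        using mu_pos pos Dp gp by (intro divide_pos_pos mult_pos_pos add_pos_pos) auto
      have ps: "0 \<le> \<mu>*q*(10*\<gamma>^4+17*\<gamma>^3+13*\<gamma>^2+5*\<gamma>+1)/(2*a*p*D) * (X \<bullet> X)
        + 2 * (- (\<gamma>^2*(6*\<gamma>^4+15*\<gamma>^3+15*\<gamma>^2+6*\<gamma>+1)/(2*r*a*p*D))) * (X \<bullet> G)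
        + \<gamma>^3*(10*\<gamma>^3+15*\<gamma>^2+8*\<gamma>+1)/(2*\<mu>*r*a*p*D) * (G \<bullet> G)"
        by (rule psd2[OF A coef_det[OF gp mu_pos a_def r_def q_def p_def D_def]])
      have k0: "0 \<le> \<mu>*r*q*D/(2*\<gamma>^2*p) * (((X - Y) + (\<gamma>*r/D) *\<^sub>R X - (\<gamma>^2/(\<mu>*D)) *\<^sub>R G) \<bullet> ((X - Y) + (\<gamma>*r/D) *\<^sub>R X - (\<gamma>^2/(\<mu>*D)) *\<^sub>R G))"
        using mu_pos pos Dp gp by (intro mult_nonneg_nonneg) auto
      show ?thesis using ps k0 by linarith
    qed
    have al: "0 \<le> 1/a" using pos by simp
    have la: "0 \<le> \<gamma>/r" using pos gp by simp
    have th: "2*\<gamma>/a = 1 - 1/a" using pos unfolding a_def by (simp add: field_simps)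
    have "(2*\<gamma>/a) * (f (x k) - f xstar) \<le> f (x k) - f xstar + Qf \<gamma> \<mu> r q p X Y G"
    proof -
      have e2: "2*\<gamma>/r = 2*(\<gamma>/r)" by simp
      show ?thesis by (rule combine_lower[OF id[unfolded e2] T0 j1 j2 al la th])
    qed
    then show ?thesis unfolding E_def X_def Y_def G_def .
  qed
  have Ek: "E k \<le> (1/r)^k * E 0" for k
  proof (induction k)
    case 0 then show ?case by simp
  next
    case (Suc k)
    have "E (Suc k) \<le> (1/r) * E k" by (rule step)
    also have "\<dots> \<le> (1/r) * ((1/r)^k * E 0)" using Suc pos by (intro mult_left_mono) auto
    finally show ?case by simp
  qed
  define X0 where "X0 = x0 - xstar"
  define G0 where "G0 = g x0"
  have E0: "E 0 \<le> (r*q/p) * (G0 \<bullet> X0)"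
  proof -
    have q0: "Qf \<gamma> \<mu> r q p X0 X0 G0 = \<mu>*r*q/(2*p) * (X0 \<bullet> X0) + \<gamma>^2/(2*\<mu>*p) * (G0 \<bullet> G0)"
      unfolding Qf_def using gp by simp
    have e: "E 0 = f x0 - f xstar + \<mu>*r*q/(2*p) * (X0 \<bullet> X0) + \<gamma>^2/(2*\<mu>*p) * (G0 \<bullet> G0)"
      unfolding E_def x_0 y_0 X0_def[symmetric] G0_def[symmetric] q0 by simp
    have i: "0 \<le> f xstar - f x0 + ((G0 \<bullet> X0) - \<mu>/2 * (X0 \<bullet> X0) - \<gamma>^2/(2*\<mu>*p) * ((G0 - \<mu> *\<^sub>R X0) \<bullet> (G0 - \<mu> *\<^sub>R X0)))"
      using I1[of 0] unfolding x_0 X0_def[symmetric] G0_def[symmetric] .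
    have ex: "(G0 - \<mu> *\<^sub>R X0) \<bullet> (G0 - \<mu> *\<^sub>R X0) = G0 \<bullet> G0 - 2 * \<mu> * (G0 \<bullet> X0) + \<mu>^2 * (X0 \<bullet> X0)"
      by (simp add: inner_simps inner_commute power2_eq_square algebra_simps)
    have alg: "(G0 \<bullet> X0) - \<mu>/2 * (X0 \<bullet> X0) - \<gamma>^2/(2*\<mu>*p) * (G0 \<bullet> G0 - 2 * \<mu> * (G0 \<bullet> X0) + \<mu>^2 * (X0 \<bullet> X0))
        + \<mu>*r*q/(2*p) * (X0 \<bullet> X0) + \<gamma>^2/(2*\<mu>*p) * (G0 \<bullet> G0) = (r*q/p) * (G0 \<bullet> X0)"
    proof -
      have m1: "\<mu>*r*q/(2*p) = \<mu>*(r*q)/(2*p)" by (simp add: mult.assoc)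
      show ?thesis unfolding m1 by (rule alg_aux[OF mu_pos pos(4) rq])
    qed
    show ?thesis using e i alg unfolding ex by linarith
  qed
  have GX: "G0 \<bullet> X0 \<le> L * (norm X0)^2"
  proof -
    have "G0 \<bullet> X0 \<le> norm G0 * norm X0" by (rule norm_cauchy_schwarz)
    also have "\<dots> \<le> (L * norm X0) * norm X0"
      using lip[of x0 xstar] unfolding G0_def X0_def g0 by (intro mult_right_mono) auto
    finally show ?thesis by (simp add: power2_eq_square)
  qed
  define N where "N = (norm (x0 - xstar))^2"
  have N0: "0 \<le> N" unfolding N_def by simp
  have E0': "E 0 \<le> (r*q/p) * L * N"
  proof -
    have "(r*q/p) * (G0 \<bullet> X0) \<le> (r*q/p) * (L * (norm X0)^2)" using GX pos by (intro mult_left_mono) auto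
    then show ?thesis using E0 unfolding N_def X0_def by simp
  qed
  have key: "a * ((r*q/p) * L) \<le> r^2 * ((\<mu> + 2 * L) / 2)"
  proof -
    have poly: "2 * a * q^2 \<le> p * (\<gamma>^2 + 2 * r * q)"
    proof -
      have "p * (\<gamma>^2 + 2 * r * q) - 2 * a * q^2 = 5*\<gamma>^3 + 6*\<gamma>^2"
        unfolding a_def r_def q_def p_def by algebra
      moreover have "0 \<le> 5*\<gamma>^3 + 6*\<gamma>^2" using gp by simp
      ultimately show ?thesis by linarith
    qed
    have l: "a * ((r*q/p) * L) = \<mu> * r^2 * (2 * a * q^2) / (2 * p * \<gamma>^2)"
      unfolding Lval using pos gp by (simp add: field_simps power2_eq_square)
    have rr: "r^2 * ((\<mu> + 2 * L) / 2) = \<mu> * r^2 * (p * (\<gamma>^2 + 2 * r * q)) / (2 * p * \<gamma>^2)"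
      unfolding Lval using pos gp by (simp add: field_simps power2_eq_square)
    have "\<mu> * r^2 * (2 * a * q^2) / (2 * p * \<gamma>^2) \<le> \<mu> * r^2 * (p * (\<gamma>^2 + 2 * r * q)) / (2 * p * \<gamma>^2)"
      using poly mu_pos pos gp by (intro divide_right_mono mult_left_mono) auto
    then show ?thesis unfolding l rr .
  qed
  have rk: "0 < (1/r)^k" using pos by simp
  have "f (x k) - f xstar \<le> (a / (2*\<gamma>)) * E k"
    using lower[of k] pos gp by (simp add: field_simps)
  also have "\<dots> \<le> (a / (2*\<gamma>)) * ((1/r)^k * E 0)"
    using Ek[of k] pos gp by (intro mult_left_mono) auto
  also have "\<dots> \<le> (a / (2*\<gamma>)) * ((1/r)^k * ((r*q/p) * L * N))"
    using E0' pos gp rk by (intro mult_left_mono) auto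
  also have "\<dots> = (1/r)^k / (2*\<gamma>) * N * (a * ((r*q/p) * L))" by (simp add: field_simps)
  also have "\<dots> \<le> (1/r)^k / (2*\<gamma>) * N * (r^2 * ((\<mu> + 2 * L) / 2))"
    using key rk gp N0 by (intro mult_left_mono) auto
  also have "\<dots> = (1 + \<gamma>) powr (2 - real k) / (2 * \<gamma>) * ((\<mu> + 2 * L) / 2) * N"
  proof -
    have p1: "r powr (2 - real k) = r powr 2 / r powr (real k)" by (rule powr_diff)
    have p2: "r powr 2 = r^2" using pos by simp
    have p3: "r powr (real k) = r^k" using pos(2) by (rule powr_realpow)
    have p4: "(1/r)^k = 1 / r^k" by (simp add: power_one_over)
    have "(1 + \<gamma>) powr (2 - real k) = r^2 * (1/r)^k"
      unfolding r_def[symmetric] p1 p2 p3 p4 by simp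
    then show ?thesis by simp
  qed
  finally show ?thesis unfolding gam_eq N_def .
qed


end
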